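(* Let $n \in \mathbb{N}$, $\Xi = [0,1]^N$, let $\Gamma$ be the exponential-minimum decoder and $d$ the cost defined in the context. Let $\xi,\xi'$ be i.i.d. uniform on $\Xi^n$ and let $Y = \mathtt{generate}(\xi;n,p,\Gamma)$. Then almost surely, for all $i\in[n]$, $$\mathbb{E}[d(Y_i,\xi_i') - d(Y_i,\xi_i) \mid Y] = 1 - p(Y_i \mid Y_{:i-1}).$$
   Context: Vocabulary $[N]$. A language model $p$ gives next-token distributions $p(\cdot\mid x)$; $y_{:i-1}=(y_1,\dots,y_{i-1})$. Decoder: $\Gamma(\xi,\mu) := \operatorname{argmin}_{i\in[N]} -\log(\xi_i)/\mu(i)$ for $\xi\in[0,1]^N$ (with $-\log(\xi_i)/0 = +\infty$). $\mathtt{generate}(\xi;n,p,\Gamma)$ for $\xi=(\xi_1,\dots,\xi_n)\in\Xi^n$ outputs $y\in[N]^n$ with $y_i = \Gamma(\xi_i,p(\cdot\mid y_{:i-1}))$. For a string $y$ and key sequence $\xi$ of the same length, $d(y,\xi) := -\sum_{i=1}^{|y|}\log \xi_{i,y_i}$, where $\xi_{i,y}$ is the $y$-th coordinate of $\xi_i$; for a single token $d(y,\xi_i) = -\log\xi_{i,y}$. *)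

theory Defs
  imports "HOL-Probability.Probability"
begin

text \<open>Vocabulary [N] = {1..N}. A key xi_i in [0,1]^N is a function nat => real
  (only coordinates 1..N matter). A language model is p :: nat list => nat => real,
  p x k = p(k | x). Positions are 0-based: position i < n uses key xi i and prefix
  take i y.\<close>

definition expmin_cost :: "(nat \<Rightarrow> real) \<Rightarrow> (nat \<Rightarrow> real) \<Rightarrow> nat \<Rightarrow> ereal" where
  "expmin_cost xi mu k = (if mu k = 0 then \<infinity> else ereal (- ln (xi k) / mu k))"

definition Gamma :: "nat \<Rightarrow> (nat \<Rightarrow> real) \<Rightarrow> (nat \<Rightarrow> real) \<Rightarrow> nat" where
  "Gamma N xi mu = arg_min_on (expmin_cost xi mu) {1..N}"

fun gen :: "nat \<Rightarrow> (nat list \<Rightarrow> nat \<Rightarrow> real) \<Rightarrow> (nat \<Rightarrow> nat \<Rightarrow> real) \<Rightarrow> nat \<Rightarrow> nat list" where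
  "gen N p xi 0 = []"
| "gen N p xi (Suc i) = gen N p xi i @ [Gamma N (xi i) (p (gen N p xi i))]"

definition generate :: "nat \<Rightarrow> (nat \<Rightarrow> nat \<Rightarrow> real) \<Rightarrow> nat \<Rightarrow> (nat list \<Rightarrow> nat \<Rightarrow> real) \<Rightarrow> nat list" where
  "generate N xi n p = gen N p xi n"

definition dtok :: "nat \<Rightarrow> (nat \<Rightarrow> real) \<Rightarrow> real" where
  "dtok y xi = - ln (xi y)"

definition key_index :: "nat \<Rightarrow> nat \<Rightarrow> (nat \<times> nat) set" where
  "key_index n N = {0..<n} \<times> {1..N}"

definition keys_uniform :: "nat \<Rightarrow> nat \<Rightarrow> (nat \<times> nat \<Rightarrow> real) measure" where
  "keys_uniform n N = PiM (key_index n N) (\<lambda>_. uniform_measure lborel {0..1::real})"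

definition as_keys :: "(nat \<times> nat \<Rightarrow> real) \<Rightarrow> nat \<Rightarrow> nat \<Rightarrow> real" where
  "as_keys f i k = f (i, k)"

definition two_keys :: "nat \<Rightarrow> nat \<Rightarrow> ((nat \<times> nat \<Rightarrow> real) \<times> (nat \<times> nat \<Rightarrow> real)) measure" where
  "two_keys n N = keys_uniform n N \<Otimes>\<^sub>M keys_uniform n N"

end

theory Submission
  imports Defs "HOL-Real_Asymp.Real_Asymp"
begin
lemma aux1: "(c::real) \<noteq> 0 \<Longrightarrow> c*P*(1/c^2 - L/c) = P/c - P*L"
  by (simp add: field_split_simps power2_eq_square)

lemma aux2: "(u::real) \<noteq> 0 \<Longrightarrow> (c::real) \<noteq> 0 \<Longrightarrow> P*u*(0-(1/u)/c) = -P/c"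
  by (simp add: field_split_simps)

lemma xlnx_lim: "((\<lambda>u::real. u * ln u) \<longlongrightarrow> 0) (at_right 0)"
  by real_asymp

lemma powr_ln_lim:
  fixes r :: real assumes r: "r \<ge> 1"
  shows "((\<lambda>u::real. u powr r * ln u) \<longlongrightarrow> 0) (at_right 0)"
proof (rule Lim_null_comparison[OF _ tendsto_rabs_zero[OF xlnx_lim]])
  show "\<forall>\<^sub>F u in at_right 0. norm (u powr r * ln u) \<le> \<bar>u * ln u\<bar>"
  proof -
    have "eventually (\<lambda>u::real. 0 < u \<and> u < 1) (at_right 0)"
      using eventually_at_right_real[of 0 "1::real"] by (auto elim: eventually_mono)
    then show ?thesis
    proof eventually_elim
      case (elim u)
      have "u powr r \<le> u powr 1" using elim r by (intro powr_mono') auto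
      then have "u powr r \<le> u" using elim by simp
      moreover have "u powr r \<ge> 0" by simp
      ultimately show ?case using elim by (auto simp: abs_mult intro!: mult_right_mono)
    qed
  qed
qed

lemma ln_powr_has_integral:
  fixes b :: real assumes b: "b \<ge> 0"
  shows "((\<lambda>u. - ln u * u powr b) has_integral (1 / (b+1)^2)) {0..1}"
proof -
  define F where "F = (\<lambda>u::real. u powr (b+1) * (1/(b+1)^2 - ln u/(b+1)))"
  have "((\<lambda>u. - ln u * u powr b) has_integral (F 1 - F 0)) {0..1}"
  proof (rule fundamental_theorem_of_calculus_interior)
    show "0 \<le> (1::real)" by simp
    show "continuous_on {0..1} F"
    proof (clarsimp simp: continuous_on_eq_continuous_within)
      fix x :: real assume x: "0 \<le> x" "x \<le> 1"
      show "continuous (at x within {0..1}) F"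
      proof (cases "x = 0")
        case True
        have "(F \<longlongrightarrow> 0) (at_right 0)"
        proof -
          have "((\<lambda>u. u powr (b+1) * (1/(b+1)^2) - (u powr (b+1) * ln u) / (b+1)) \<longlongrightarrow> 0 * (1/(b+1)^2) - 0/(b+1)) (at_right 0)"
            apply (intro tendsto_intros powr_ln_lim)
            using b eventually_at_right_real[of 0 "1::real"] by (auto intro!: tendsto_eq_intros elim: eventually_mono)
          then show ?thesis unfolding F_def by (simp add: algebra_simps)
        qed
        then have "(F \<longlongrightarrow> F 0) (at 0 within {0..1})"
          by (simp add: F_def at_within_Icc_at_right)
        then show ?thesis using True by (simp add: continuous_within)
      next
        case False
        have "continuous (at x) F"
          unfolding F_def using False x b by (intro continuous_intros) simp_all
        then show ?thesis by (rule continuous_at_imp_continuous_within)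
      qed
    qed
    fix u :: real assume u: "u \<in> {0<..<1}"
    have "(F has_real_derivative
           ((b+1) * u powr (b+1-1) * (1/(b+1)^2 - ln u/(b+1)) + u powr (b+1) * (0 - (1/u)/(b+1)))) (at u)"
      unfolding F_def using u b by (auto intro!: derivative_eq_intros)
    also have "(b+1) * u powr (b+1-1) * (1/(b+1)^2 - ln u/(b+1)) + u powr (b+1) * (0 - (1/u)/(b+1)) = - ln u * u powr b"
    proof -
      define P where "P = u powr b"
      have h1: "u powr (b+1) = P * u" using u by (simp add: powr_add P_def)
      have h2: "u powr (b+1-1) = P" by (simp add: P_def)
      have bp: "b + 1 \<noteq> 0" using b by simp
      have e1: "(b+1) * P * (1/(b+1)^2 - ln u/(b+1)) = P/(b+1) - P * ln u"
        using aux1[OF bp, of P "ln u"] by simp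
      have e2: "P*u * (0 - (1/u)/(b+1)) = - P/(b+1)" using u bp aux2[of u "b+1" P] by simp
      show ?thesis unfolding h1 h2 using e1 e2 by (simp add: P_def)
    qed
    finally show "(F has_vector_derivative - ln u * u powr b) (at u)"
      by (simp add: has_real_derivative_iff_has_vector_derivative)
  qed
  then show ?thesis using b by (simp add: F_def)
qed

abbreviation U :: "real measure" where "U \<equiv> uniform_measure lborel {0..1::real}"

lemma ennreal_div1[simp]: "(x::ennreal) / 1 = x"
  by (simp add: divide_ennreal_def)

lemma ln_nonpos01: "0 \<le> (x::real) \<Longrightarrow> x \<le> 1 \<Longrightarrow> ln x \<le> 0"
  by (cases "x = 0") auto

lemma U_prob: "prob_space U"
  by (rule prob_space_uniform_measure) auto

lemma space_U[simp]: "space U = UNIV" by simp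
lemma sets_U[simp]: "sets U = sets borel" by simp

lemma AE_U: "AE u in U. 0 < u \<and> u < 1"
proof -
  have "AE u in lborel. u \<notin> {0, 1}"
    by (intro AE_I'[where N="{0,1}"]) (auto intro: finite_imp_null_set_lborel)
  then show ?thesis
    by (intro AE_uniform_measureI) (auto elim!: eventually_mono)
qed

lemma emeasure_U: "A \<in> sets borel \<Longrightarrow> emeasure U A = emeasure lborel (A \<inter> {0..1})"
  by (subst emeasure_uniform_measure) (auto simp: Int_commute)

lemma U_less: "0 \<le> t \<Longrightarrow> t \<le> 1 \<Longrightarrow> emeasure U {v. v < t} = ennreal t"
proof -
  assume t: "0 \<le> t" "t \<le> 1"
  have "{v. v < t} \<inter> {0..1} = {0..<t}" using t by auto
  then show ?thesis using t by (simp add: emeasure_U Int_commute)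
qed

lemma U_le: "0 \<le> t \<Longrightarrow> t \<le> 1 \<Longrightarrow> emeasure U {v. v \<le> t} = ennreal t"
proof -
  assume t: "0 \<le> t" "t \<le> 1"
  have "{v. v \<le> t} \<inter> {0..1} = {0..t}" using t by auto
  then show ?thesis using t by (simp add: emeasure_U Int_commute)
qed

lemma nn_integral_U:
  assumes f: "f \<in> borel_measurable borel" and nn: "\<And>x. x \<in> {0..1} \<Longrightarrow> 0 \<le> f x"
    and I: "(f has_integral I) {0..1::real}"
  shows "(\<integral>\<^sup>+u. ennreal (f u) \<partial>U) = ennreal I"
proof -
  have "(\<integral>\<^sup>+u. ennreal (f u) \<partial>U) = (\<integral>\<^sup>+u. ennreal (f u) * indicator {0..1} u \<partial>lborel) / emeasure lborel {0..1::real}"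
    using f by (subst nn_integral_uniform_measure) auto
  also have "\<dots> = (\<integral>\<^sup>+u. ennreal (indicator {0..1} u * f u) \<partial>lborel)"
    by (auto intro!: nn_integral_cong simp: indicator_def)
  also have "\<dots> = ennreal I"
    using nn I by (rule nn_integral_has_integral_lebesgue)
  finally show ?thesis .
qed

lemma U_powr: "b \<ge> 0 \<Longrightarrow> (\<integral>\<^sup>+u. ennreal (u powr b) \<partial>U) = ennreal (1/(b+1))"
  using has_integral_powr_from_0[of b 1] by (intro nn_integral_U) auto

lemma U_lnpowr: "b \<ge> 0 \<Longrightarrow> (\<integral>\<^sup>+u. ennreal (- ln u * u powr b) \<partial>U) = ennreal (1/(b+1)^2)"
  using ln_powr_has_integral[of b]
  by (intro nn_integral_U) (auto intro!: mult_nonpos_nonneg ln_nonpos01)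

lemma U_ln: "(\<integral>\<^sup>+u. ennreal (- ln u) \<partial>U) = 1"
proof -
  have "(\<integral>\<^sup>+u. ennreal (- ln u) \<partial>U) = (\<integral>\<^sup>+u. ennreal (- ln u * u powr 0) \<partial>U)"
    using AE_U by (intro nn_integral_cong_AE) (auto elim!: eventually_mono)
  then show ?thesis using U_lnpowr[of 0] by simp
qed

definition AS :: "nat \<Rightarrow> (nat \<Rightarrow> real) \<Rightarrow> (nat \<Rightarrow> real) \<Rightarrow> nat set" where
  "AS N xi mu = {y\<in>{1..N}. \<forall>y'\<in>{1..N}. expmin_cost xi mu y \<le> expmin_cost xi mu y'}"

lemma Gamma_AS: "Gamma N xi mu = (SOME y. y \<in> AS N xi mu)"
proof -
  let ?f = "expmin_cost xi mu"
  have "Gamma N xi mu = (SOME y. y \<in> {1..N} \<and> ?f y = Min (?f ` {1..N}))"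
    unfolding Gamma_def by (rule arg_min_SOME_Min) simp
  also have "(\<lambda>y. y \<in> {1..N} \<and> ?f y = Min (?f ` {1..N})) = (\<lambda>y. y \<in> AS N xi mu)"
  proof
    fix y
    show "(y \<in> {1..N} \<and> ?f y = Min (?f ` {1..N})) = (y \<in> AS N xi mu)"
    proof (cases "y \<in> {1..N}")
      case True
      then have ne: "?f ` {1..N} \<noteq> {}" by auto
      have "?f y = Min (?f ` {1..N}) \<longleftrightarrow> (\<forall>y'\<in>{1..N}. ?f y \<le> ?f y')"
        using True by (subst eq_commute) (auto simp: Min_eq_iff ne)
      then show ?thesis using True by (simp add: AS_def)
    qed (auto simp: AS_def)
  qed
  finally show ?thesis .
qed

lemma Gamma_eq_iff:
  "Gamma N xi mu = c \<longleftrightarrow> (\<exists>T\<in>Pow {1..N}. (SOME y. y \<in> T) = c \<and>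
      (\<forall>y\<in>{1..N}. y \<in> T \<longleftrightarrow> (\<forall>y'\<in>{1..N}. expmin_cost xi mu y \<le> expmin_cost xi mu y')))"
  (is "?L \<longleftrightarrow> ?R")
proof
  assume ?L then show ?R
    by (intro bexI[of _ "AS N xi mu"]) (auto simp: Gamma_AS AS_def)
next
  assume ?R
  then obtain T where T: "T \<subseteq> {1..N}" "(SOME y. y \<in> T) = c"
    "\<forall>y\<in>{1..N}. y \<in> T \<longleftrightarrow> (\<forall>y'\<in>{1..N}. expmin_cost xi mu y \<le> expmin_cost xi mu y')" by auto
  then have "T = AS N xi mu" unfolding AS_def by auto
  then show ?L using T by (simp add: Gamma_AS)
qed

lemma Gamma_in: "1 \<le> N \<Longrightarrow> Gamma N xi mu \<in> {1..N}"
  unfolding Gamma_def by (rule arg_min_if_finite(1)) auto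

lemma Gamma_least: "1 \<le> N \<Longrightarrow> j \<in> {1..N} \<Longrightarrow> expmin_cost xi mu (Gamma N xi mu) \<le> expmin_cost xi mu j"
  unfolding Gamma_def by (rule arg_min_least) auto

lemma Gamma_strict:
  assumes c: "c \<in> {1..N}" and lt: "\<And>j. j \<in> {1..N} \<Longrightarrow> j \<noteq> c \<Longrightarrow> expmin_cost xi mu c < expmin_cost xi mu j"
  shows "Gamma N xi mu = c"
proof (rule ccontr)
  assume ne: "Gamma N xi mu \<noteq> c"
  have N: "1 \<le> N" using c by auto
  have "Gamma N xi mu \<in> {1..N}" using Gamma_in[OF N] .
  with lt ne have "expmin_cost xi mu c < expmin_cost xi mu (Gamma N xi mu)" by auto
  moreover have "\<not>(\<exists>x\<in>{1..N}. expmin_cost xi mu x < expmin_cost xi mu (Gamma N xi mu))"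
    unfolding Gamma_def by (rule arg_min_if_finite(2)) (use N in auto)
  ultimately show False using c by auto
qed

lemma Gamma_cong:
  assumes "\<And>k. k \<in> {1..N} \<Longrightarrow> xi k = xi' k"
  shows "Gamma N xi mu = Gamma N xi' mu"
proof -
  have "AS N xi mu = AS N xi' mu"
    using assms unfolding AS_def expmin_cost_def by auto
  then show ?thesis by (simp add: Gamma_AS)
qed

lemma pred_const_bool: "Measurable.pred M (\<lambda>x. P)"
  by (cases P) (auto simp: pred_def)

lemma pred_Gamma:
  assumes xi: "\<And>k. k \<in> {1..N} \<Longrightarrow> (\<lambda>\<omega>. xi \<omega> k) \<in> borel_measurable M"
  shows "Measurable.pred M (\<lambda>\<omega>. Gamma N (xi \<omega>) mu = c)"
proof -
  have cm: "(\<lambda>\<omega>. expmin_cost (xi \<omega>) mu y) \<in> borel_measurable M" if y: "y \<in> {1..N}" for y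
  proof (cases "mu y = 0")
    case True then show ?thesis by (simp add: expmin_cost_def)
  next
    case False
    have [measurable]: "(\<lambda>\<omega>. xi \<omega> y) \<in> borel_measurable M" using xi y .
    show ?thesis using False unfolding expmin_cost_def by simp
  qed
  have le: "Measurable.pred M (\<lambda>\<omega>. expmin_cost (xi \<omega>) mu y \<le> expmin_cost (xi \<omega>) mu y')"
    if "y \<in> {1..N}" "y' \<in> {1..N}" for y y'
    using cm[OF that(1)] cm[OF that(2)] by measurable
  show ?thesis
    unfolding Gamma_eq_iff
    by (intro pred_intros_finite pred_intros_logic pred_const_bool le) auto
qed

lemma cost_cmp:
  assumes xc: "0 < xi c" "xi c < 1" and xj: "0 < xi j" "xi j < 1" and mc: "0 < mu c" and mj: "0 \<le> mu j"
  shows "expmin_cost xi mu c < expmin_cost xi mu j \<longleftrightarrow> xi j < xi c powr (mu j / mu c)"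
    and "expmin_cost xi mu c \<le> expmin_cost xi mu j \<longleftrightarrow> xi j \<le> xi c powr (mu j / mu c)"
proof -
  have conj: "(expmin_cost xi mu c < expmin_cost xi mu j \<longleftrightarrow> xi j < xi c powr (mu j / mu c))
     \<and> (expmin_cost xi mu c \<le> expmin_cost xi mu j \<longleftrightarrow> xi j \<le> xi c powr (mu j / mu c))"
  proof (cases "mu j = 0")
    case True
    then show ?thesis using xc xj mc by (simp add: expmin_cost_def)
  next
    case False
    then have mj': "0 < mu j" using mj by simp
    have p: "0 < xi c powr (mu j / mu c)" using xc by simp
    have l1: "xi j < xi c powr (mu j / mu c) \<longleftrightarrow> ln (xi j) < (mu j / mu c) * ln (xi c)"
      using ln_less_cancel_iff[OF xj(1) p] xc by (simp add: ln_powr)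
    have l2: "xi j \<le> xi c powr (mu j / mu c) \<longleftrightarrow> ln (xi j) \<le> (mu j / mu c) * ln (xi c)"
      using ln_le_cancel_iff[OF xj(1) p] xc by (simp add: ln_powr)
    have r1: "- ln (xi c) / mu c < - ln (xi j) / mu j \<longleftrightarrow> ln (xi j) < (mu j / mu c) * ln (xi c)"
      using mc mj' by (simp add: field_simps)
    have r2: "- ln (xi c) / mu c \<le> - ln (xi j) / mu j \<longleftrightarrow> ln (xi j) \<le> (mu j / mu c) * ln (xi c)"
      using mc mj' by (simp add: field_simps)
    show ?thesis using mc mj' l1 l2 r1 r2 by (simp add: expmin_cost_def)
  qed
  then show "expmin_cost xi mu c < expmin_cost xi mu j \<longleftrightarrow> xi j < xi c powr (mu j / mu c)"
    by (rule conjunct1)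
  from conj show "expmin_cost xi mu c \<le> expmin_cost xi mu j \<longleftrightarrow> xi j \<le> xi c powr (mu j / mu c)"
    by (rule conjunct2)
qed

lemma Gamma_zero_prob:
  assumes mu_nn: "\<And>k. k \<in> {1..N} \<Longrightarrow> 0 \<le> mu k" and mu_sum: "(\<Sum>k\<in>{1..N}. mu k) = 1"
    and "mu c = 0"
  shows "Gamma N xi mu \<noteq> c"
proof
  assume g: "Gamma N xi mu = c"
  have "\<exists>j\<in>{1..N}. mu j \<noteq> 0"
  proof (rule ccontr)
    assume "\<not> ?thesis" then have "(\<Sum>k\<in>{1..N}. mu k) = 0" by simp
    with mu_sum show False by simp
  qed
  then obtain j where j: "j \<in> {1..N}" "mu j \<noteq> 0" by auto
  then have N: "1 \<le> N" by auto
  have "expmin_cost xi mu c \<le> expmin_cost xi mu j" using Gamma_least[OF N j(1), of xi mu] g by simp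
  then show False using j \<open>mu c = 0\<close> by (simp add: expmin_cost_def)
qed

lemma prod_01:
  "finite W \<Longrightarrow> (\<Prod>j\<in>W. (if P j then 1 else 0 :: ennreal)) = (if \<forall>j\<in>W. P j then 1 else 0)"
  by (induct W rule: finite_induct) auto

lemma sum_a:
  fixes N :: nat
  assumes mu_sum: "(\<Sum>k\<in>{1..N}. mu k) = 1" and c: "c \<in> {1..N}" and mc: "0 < (mu c::real)"
  shows "(\<Sum>j\<in>{1..N} - {c}. mu j / mu c) = (1 - mu c) / mu c"
proof -
  have "(\<Sum>j\<in>{1..N} - {c}. mu j) = 1 - mu c"
  proof -
    have f: "finite {1..N::nat}" by simp
    show ?thesis using sum_diff1[OF f, of mu c] c mu_sum by simp
  qed
  then show ?thesis by (simp add: sum_divide_distrib[symmetric])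
qed

lemma sp_compute:
  fixes N :: nat and mu :: "nat \<Rightarrow> real" and c :: nat and w :: "real \<Rightarrow> ennreal"
  assumes mu_nn: "\<And>k. k \<in> {1..N} \<Longrightarrow> 0 \<le> mu k" and mu_sum: "(\<Sum>k\<in>{1..N}. mu k) = 1"
    and c: "c \<in> {1..N}" and mc: "0 < mu c" and w[measurable]: "w \<in> borel_measurable borel"
  shows "(\<integral>\<^sup>+x. w (x c) * (\<Prod>j\<in>{1..N}-{c}. (if x j < x c powr (mu j / mu c) then 1 else 0 :: ennreal)) \<partial>PiM {1..N} (\<lambda>_. U))
         = (\<integral>\<^sup>+u. w u * ennreal (u powr ((1 - mu c) / mu c)) \<partial>U)"
    and "(\<integral>\<^sup>+x. w (x c) * (\<Prod>j\<in>{1..N}-{c}. (if x j \<le> x c powr (mu j / mu c) then 1 else 0 :: ennreal)) \<partial>PiM {1..N} (\<lambda>_. U))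
         = (\<integral>\<^sup>+u. w u * ennreal (u powr ((1 - mu c) / mu c)) \<partial>U)"
proof -
  interpret P: product_prob_space "\<lambda>_::nat. U" by (intro product_prob_spaceI U_prob)
  define W where "W = {1..N} - {c}"
  define a where "a j = mu j / mu c" for j
  have fin: "finite W" and cW: "c \<notin> W" and SW: "{1..N} = insert c W" using c by (auto simp: W_def)
  have SW': "insert c ({1..N}-{c}) = {1..N}" using c by auto
  have a_nn: "0 \<le> a j" if "j \<in> W" for j using mu_nn[of j] that mc by (auto simp: a_def W_def)
  have suma: "(\<Sum>j\<in>W. a j) = (1 - mu c) / mu c"
    unfolding W_def a_def by (rule sum_a[OF mu_sum c mc])
  have pw: "(\<Prod>j\<in>W. ennreal (y powr a j)) = ennreal (y powr ((1 - mu c) / mu c))" if "0 < y" for y :: real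
    using that by (simp add: prod_ennreal powr_sum[symmetric] suma)
  have ym: "y powr a j \<le> 1" "0 \<le> y powr a j" if "0 < y" "y < 1" "j \<in> W" for y j
    using that a_nn[of j] by (auto intro!: powr_le1)
  show "(\<integral>\<^sup>+x. w (x c) * (\<Prod>j\<in>{1..N}-{c}. (if x j < x c powr (mu j / mu c) then 1 else 0 :: ennreal)) \<partial>PiM {1..N} (\<lambda>_. U))
         = (\<integral>\<^sup>+u. w u * ennreal (u powr ((1 - mu c) / mu c)) \<partial>U)"
  proof -
    have "(\<integral>\<^sup>+x. w (x c) * (\<Prod>j\<in>{1..N}-{c}. (if x j < x c powr (mu j / mu c) then 1 else 0 :: ennreal)) \<partial>PiM {1..N} (\<lambda>_. U))
      = (\<integral>\<^sup>+x. w (x c) * (\<Prod>j\<in>W. (if x j < x c powr a j then 1 else 0 :: ennreal)) \<partial>PiM (insert c W) (\<lambda>_. U))"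
      unfolding W_def a_def SW' ..
    also have "\<dots> = (\<integral>\<^sup>+y. (\<integral>\<^sup>+x. w ((x(c:=y)) c) * (\<Prod>j\<in>W. (if (x(c:=y)) j < (x(c:=y)) c powr a j then 1 else 0 :: ennreal)) \<partial>PiM W (\<lambda>_. U)) \<partial>U)"
      by (rule P.product_nn_integral_insert_rev[OF fin cW]) measurable
    also have "\<dots> = (\<integral>\<^sup>+y. w y * (\<Prod>j\<in>W. emeasure U {v. v < y powr a j}) \<partial>U)"
    proof (rule nn_integral_cong)
      fix y :: real
      have "(\<integral>\<^sup>+x. w ((x(c:=y)) c) * (\<Prod>j\<in>W. (if (x(c:=y)) j < (x(c:=y)) c powr a j then 1 else 0 :: ennreal)) \<partial>PiM W (\<lambda>_. U))
          = (\<integral>\<^sup>+x. w y * (\<Prod>j\<in>W. indicator {v. v < y powr a j} (x j)) \<partial>PiM W (\<lambda>_. U))"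
        using cW by (intro nn_integral_cong arg_cong2[where f=times] prod.cong) (auto simp: indicator_def)
      also have "\<dots> = w y * (\<integral>\<^sup>+x. (\<Prod>j\<in>W. indicator {v. v < y powr a j} (x j)) \<partial>PiM W (\<lambda>_. U))"
        by (rule nn_integral_cmult) measurable
      also have "(\<integral>\<^sup>+x. (\<Prod>j\<in>W. indicator {v. v < y powr a j} (x j)) \<partial>PiM W (\<lambda>_. U))
          = (\<Prod>j\<in>W. (\<integral>\<^sup>+v. indicator {v. v < y powr a j} v \<partial>U))"
        by (rule P.product_nn_integral_prod[OF fin]) measurable
      also have "\<dots> = (\<Prod>j\<in>W. emeasure U {v. v < y powr a j})"
        by (intro prod.cong refl nn_integral_indicator) measurable
      finally show "(\<integral>\<^sup>+x. w ((x(c:=y)) c) * (\<Prod>j\<in>W. (if (x(c:=y)) j < (x(c:=y)) c powr a j then 1 else 0 :: ennreal)) \<partial>PiM W (\<lambda>_. U))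
          = w y * (\<Prod>j\<in>W. emeasure U {v. v < y powr a j})" .
    qed
    also have "\<dots> = (\<integral>\<^sup>+y. w y * ennreal (y powr ((1 - mu c) / mu c)) \<partial>U)"
      using AE_U
    proof (intro nn_integral_cong_AE, eventually_elim)
      case (elim y)
      have "(\<Prod>j\<in>W. emeasure U {v. v < y powr a j}) = (\<Prod>j\<in>W. ennreal (y powr a j))"
        using elim ym by (intro prod.cong refl U_less) auto
      then show ?case using pw elim by simp
    qed
    finally show ?thesis .
  qed
  show "(\<integral>\<^sup>+x. w (x c) * (\<Prod>j\<in>{1..N}-{c}. (if x j \<le> x c powr (mu j / mu c) then 1 else 0 :: ennreal)) \<partial>PiM {1..N} (\<lambda>_. U))
         = (\<integral>\<^sup>+u. w u * ennreal (u powr ((1 - mu c) / mu c)) \<partial>U)"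
  proof -
    have "(\<integral>\<^sup>+x. w (x c) * (\<Prod>j\<in>{1..N}-{c}. (if x j \<le> x c powr (mu j / mu c) then 1 else 0 :: ennreal)) \<partial>PiM {1..N} (\<lambda>_. U))
      = (\<integral>\<^sup>+x. w (x c) * (\<Prod>j\<in>W. (if x j \<le> x c powr a j then 1 else 0 :: ennreal)) \<partial>PiM (insert c W) (\<lambda>_. U))"
      unfolding W_def a_def SW' ..
    also have "\<dots> = (\<integral>\<^sup>+y. (\<integral>\<^sup>+x. w ((x(c:=y)) c) * (\<Prod>j\<in>W. (if (x(c:=y)) j \<le> (x(c:=y)) c powr a j then 1 else 0 :: ennreal)) \<partial>PiM W (\<lambda>_. U)) \<partial>U)"
      by (rule P.product_nn_integral_insert_rev[OF fin cW]) measurable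
    also have "\<dots> = (\<integral>\<^sup>+y. w y * (\<Prod>j\<in>W. emeasure U {v. v \<le> y powr a j}) \<partial>U)"
    proof (rule nn_integral_cong)
      fix y :: real
      have "(\<integral>\<^sup>+x. w ((x(c:=y)) c) * (\<Prod>j\<in>W. (if (x(c:=y)) j \<le> (x(c:=y)) c powr a j then 1 else 0 :: ennreal)) \<partial>PiM W (\<lambda>_. U))
          = (\<integral>\<^sup>+x. w y * (\<Prod>j\<in>W. indicator {v. v \<le> y powr a j} (x j)) \<partial>PiM W (\<lambda>_. U))"
        using cW by (intro nn_integral_cong arg_cong2[where f=times] prod.cong) (auto simp: indicator_def)
      also have "\<dots> = w y * (\<integral>\<^sup>+x. (\<Prod>j\<in>W. indicator {v. v \<le> y powr a j} (x j)) \<partial>PiM W (\<lambda>_. U))"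
        by (rule nn_integral_cmult) measurable
      also have "(\<integral>\<^sup>+x. (\<Prod>j\<in>W. indicator {v. v \<le> y powr a j} (x j)) \<partial>PiM W (\<lambda>_. U))
          = (\<Prod>j\<in>W. (\<integral>\<^sup>+v. indicator {v. v \<le> y powr a j} v \<partial>U))"
        by (rule P.product_nn_integral_prod[OF fin]) measurable
      also have "\<dots> = (\<Prod>j\<in>W. emeasure U {v. v \<le> y powr a j})"
        by (intro prod.cong refl nn_integral_indicator) measurable
      finally show "(\<integral>\<^sup>+x. w ((x(c:=y)) c) * (\<Prod>j\<in>W. (if (x(c:=y)) j \<le> (x(c:=y)) c powr a j then 1 else 0 :: ennreal)) \<partial>PiM W (\<lambda>_. U))
          = w y * (\<Prod>j\<in>W. emeasure U {v. v \<le> y powr a j})" .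
    qed
    also have "\<dots> = (\<integral>\<^sup>+y. w y * ennreal (y powr ((1 - mu c) / mu c)) \<partial>U)"
      using AE_U
    proof (intro nn_integral_cong_AE, eventually_elim)
      case (elim y)
      have "(\<Prod>j\<in>W. emeasure U {v. v \<le> y powr a j}) = (\<Prod>j\<in>W. ennreal (y powr a j))"
        using elim ym by (intro prod.cong refl U_le) auto
      then show ?case using pw elim by simp
    qed
    finally show ?thesis .
  qed
qed

lemma sp_nn:
  fixes N :: nat and mu :: "nat \<Rightarrow> real" and c :: nat and w :: "real \<Rightarrow> ennreal"
  assumes mu_nn: "\<And>k. k \<in> {1..N} \<Longrightarrow> 0 \<le> mu k" and mu_sum: "(\<Sum>k\<in>{1..N}. mu k) = 1"
    and c: "c \<in> {1..N}" and w[measurable]: "w \<in> borel_measurable borel"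
  shows "(\<integral>\<^sup>+x. w (x c) * indicator {x. Gamma N x mu = c} x \<partial>PiM {1..N} (\<lambda>_. U))
     = (if mu c = 0 then 0 else (\<integral>\<^sup>+u. w u * ennreal (u powr ((1 - mu c) / mu c)) \<partial>U))"
proof (cases "mu c = 0")
  case True
  then have "\<And>x. Gamma N x mu \<noteq> c" using Gamma_zero_prob[OF mu_nn mu_sum] by blast
  then show ?thesis using True by simp
next
  case False
  then have mc: "0 < mu c" using mu_nn[OF c] by simp
  interpret P: product_prob_space "\<lambda>_::nat. U" "{1..N}" by (intro product_prob_spaceI U_prob)
  let ?Q = "PiM {1..N} (\<lambda>_::nat. U)"
  let ?L = "\<lambda>x. w (x c) * (\<Prod>j\<in>{1..N}-{c}. (if x j < x c powr (mu j / mu c) then 1 else 0 :: ennreal))"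
  let ?H = "\<lambda>x. w (x c) * (\<Prod>j\<in>{1..N}-{c}. (if x j \<le> x c powr (mu j / mu c) then 1 else 0 :: ennreal))"
  let ?M = "\<lambda>x. w (x c) * indicator {x. Gamma N x mu = c} x"
  have AEQ: "AE x in ?Q. \<forall>k\<in>{1..N}. 0 < x k \<and> x k < 1"
  proof (rule AE_finite_allI)
    fix k assume k: "k \<in> {1..N}"
    show "AE x in ?Q. 0 < x k \<and> x k < 1" using P.AE_component[OF k AE_U] by simp
  qed simp
  have sand: "AE x in ?Q. ?L x \<le> ?M x \<and> ?M x \<le> ?H x"
    using AEQ
  proof eventually_elim
    case (elim x)
    have xc: "0 < x c" "x c < 1" using elim c by auto
    have cmp1: "expmin_cost x mu c < expmin_cost x mu j \<longleftrightarrow> x j < x c powr (mu j / mu c)"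
      if "j \<in> {1..N}" for j
      using cost_cmp(1)[of x c j mu] xc mc mu_nn[OF that] elim that by auto
    have cmp2: "expmin_cost x mu c \<le> expmin_cost x mu j \<longleftrightarrow> x j \<le> x c powr (mu j / mu c)"
      if "j \<in> {1..N}" for j
      using cost_cmp(2)[of x c j mu] xc mc mu_nn[OF that] elim that by auto
    have fin: "finite ({1..N} - {c})" by simp
    have 1: "?L x \<le> ?M x"
    proof (cases "\<forall>j\<in>{1..N}-{c}. x j < x c powr (mu j / mu c)")
      case True
      then have "Gamma N x mu = c" using cmp1 by (intro Gamma_strict[OF c]) auto
      then show ?thesis unfolding prod_01[OF fin] using True by simp
    next
      case False then show ?thesis unfolding prod_01[OF fin] by auto
    qed
    have 2: "?M x \<le> ?H x"
    proof (cases "Gamma N x mu = c")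
      case True
      have N: "1 \<le> N" using c by auto
      have "\<forall>j\<in>{1..N}-{c}. x j \<le> x c powr (mu j / mu c)"
        using Gamma_least[OF N, of _ x mu] True cmp2 by auto
      then show ?thesis unfolding prod_01[OF fin] using True by simp
    next
      case False then show ?thesis by simp
    qed
    show ?case using 1 2 by simp
  qed
  have "integral\<^sup>N ?Q ?L \<le> integral\<^sup>N ?Q ?M"
    using sand by (intro nn_integral_mono_AE) (auto elim: eventually_mono)
  moreover have "integral\<^sup>N ?Q ?M \<le> integral\<^sup>N ?Q ?H"
    using sand by (intro nn_integral_mono_AE) (auto elim: eventually_mono)
  ultimately show ?thesis
    using sp_compute[OF mu_nn mu_sum c mc w] False by (simp add: antisym)
qed

lemma b_plus1: "0 < m \<Longrightarrow> (1 - m) / m + 1 = 1 / (m::real)"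
  by (simp add: field_simps)

lemma sp_emeasure:
  fixes N :: nat and mu :: "nat \<Rightarrow> real" and c :: nat
  assumes mu_nn: "\<And>k. k \<in> {1..N} \<Longrightarrow> 0 \<le> mu k" and mu_sum: "(\<Sum>k\<in>{1..N}. mu k) = 1"
    and c: "c \<in> {1..N}"
  shows "(\<integral>\<^sup>+x. indicator {x. Gamma N x mu = c} x \<partial>PiM {1..N} (\<lambda>_. U)) = ennreal (mu c)"
proof -
  have wm: "(\<lambda>u::real. 1::ennreal) \<in> borel_measurable borel" by (rule measurable_const) simp
  have "(\<integral>\<^sup>+x. indicator {x. Gamma N x mu = c} x \<partial>PiM {1..N} (\<lambda>_. U))
      = (\<integral>\<^sup>+x. (\<lambda>_. 1) (x c) * indicator {x. Gamma N x mu = c} x \<partial>PiM {1..N} (\<lambda>_. U))" by simp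
  also have "\<dots> = (if mu c = 0 then 0 else (\<integral>\<^sup>+u. 1 * ennreal (u powr ((1 - mu c) / mu c)) \<partial>U))"
    by (rule sp_nn[OF mu_nn mu_sum c wm])
  also have "\<dots> = ennreal (mu c)"
  proof (cases "mu c = 0")
    case False
    then have mc: "0 < mu c" using mu_nn[OF c] by simp
    have b: "0 \<le> (1 - mu c) / mu c"
    proof -
      have "mu c \<le> 1"
      proof -
        have f: "finite {1..N::nat}" by simp
        have "mu c \<le> (\<Sum>k\<in>{1..N}. mu k)" using member_le_sum[OF c, of mu] mu_nn by auto
        then show ?thesis using mu_sum by simp
      qed
      then show ?thesis using mc by simp
    qed
    show ?thesis using False U_powr[OF b] b_plus1[OF mc] by simp
  qed simp
  finally show ?thesis .
qed

lemma sp_ln_nn: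
  fixes N :: nat and mu :: "nat \<Rightarrow> real" and c :: nat
  assumes mu_nn: "\<And>k. k \<in> {1..N} \<Longrightarrow> 0 \<le> mu k" and mu_sum: "(\<Sum>k\<in>{1..N}. mu k) = 1"
    and c: "c \<in> {1..N}"
  shows "(\<integral>\<^sup>+x. ennreal (- ln (x c)) * indicator {x. Gamma N x mu = c} x \<partial>PiM {1..N} (\<lambda>_. U)) = ennreal ((mu c)^2)"
proof -
  have wm: "(\<lambda>u::real. ennreal (- ln u)) \<in> borel_measurable borel" by measurable
  have "(\<integral>\<^sup>+x. ennreal (- ln (x c)) * indicator {x. Gamma N x mu = c} x \<partial>PiM {1..N} (\<lambda>_. U))
     = (if mu c = 0 then 0 else (\<integral>\<^sup>+u. ennreal (- ln u) * ennreal (u powr ((1 - mu c) / mu c)) \<partial>U))"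
    by (rule sp_nn[OF mu_nn mu_sum c wm])
  also have "\<dots> = ennreal ((mu c)^2)"
  proof (cases "mu c = 0")
    case False
    then have mc: "0 < mu c" using mu_nn[OF c] by simp
    have b: "0 \<le> (1 - mu c) / mu c"
    proof -
      have "mu c \<le> (\<Sum>k\<in>{1..N}. mu k)" using member_le_sum[OF c, of mu] mu_nn by auto
      then show ?thesis using mu_sum mc by simp
    qed
    have "(\<integral>\<^sup>+u. ennreal (- ln u) * ennreal (u powr ((1 - mu c) / mu c)) \<partial>U)
        = (\<integral>\<^sup>+u. ennreal (- ln u * u powr ((1 - mu c) / mu c)) \<partial>U)"
      by (intro nn_integral_cong) (rule ennreal_mult''[symmetric], simp)
    also have "\<dots> = ennreal (1 / ((1 - mu c) / mu c + 1)^2)" by (rule U_lnpowr[OF b])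
    also have "\<dots> = ennreal ((mu c)^2)" using b_plus1[OF mc] mc by (simp add: power_divide)
    finally show ?thesis using False by simp
  qed simp
  finally show ?thesis .
qed

lemma meas_Gamma_Q:
  "Measurable.pred (PiM {1..N} (\<lambda>_::nat. U)) (\<lambda>x. Gamma N x mu = c)"
  by (rule pred_Gamma[where xi="\<lambda>x. x"]) simp

lemma sp_L1:
  fixes N :: nat and mu :: "nat \<Rightarrow> real" and c :: nat
  assumes mu_nn: "\<And>k. k \<in> {1..N} \<Longrightarrow> 0 \<le> mu k" and mu_sum: "(\<Sum>k\<in>{1..N}. mu k) = 1"
    and c: "c \<in> {1..N}"
  shows "integrable (PiM {1..N} (\<lambda>_. U)) (\<lambda>x. indicator {x. Gamma N x mu = c} x :: real)"
    and "(\<integral>x. indicator {x. Gamma N x mu = c} x \<partial>PiM {1..N} (\<lambda>_. U)) = (mu c :: real)"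
proof -
  interpret P: product_prob_space "\<lambda>_::nat. U" "{1..N}" by (intro product_prob_spaceI U_prob)
  have [measurable]: "Measurable.pred (PiM {1..N} (\<lambda>_::nat. U)) (\<lambda>x. Gamma N x mu = c)"
    by (rule meas_Gamma_Q)
  have m: "(\<lambda>x. indicator {x. Gamma N x mu = c} x :: real) \<in> borel_measurable (PiM {1..N} (\<lambda>_. U))"
    unfolding indicator_def by measurable
  have nn: "(\<integral>\<^sup>+x. ennreal (indicator {x. Gamma N x mu = c} x) \<partial>PiM {1..N} (\<lambda>_. U)) = ennreal (mu c)"
    using sp_emeasure[OF mu_nn mu_sum c] by (simp only: ennreal_indicator)
  show "integrable (PiM {1..N} (\<lambda>_. U)) (\<lambda>x. indicator {x. Gamma N x mu = c} x :: real)"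
    using m nn by (intro integrableI_nonneg) auto
  have "(\<integral>x. indicator {x. Gamma N x mu = c} x \<partial>PiM {1..N} (\<lambda>_. U)) = enn2real (ennreal (mu c))"
    using m nn by (subst integral_eq_nn_integral) auto
  then show "(\<integral>x. indicator {x. Gamma N x mu = c} x \<partial>PiM {1..N} (\<lambda>_. U)) = (mu c :: real)"
    using mu_nn[OF c] by simp
qed

lemma sp_L2:
  fixes N :: nat and mu :: "nat \<Rightarrow> real" and c :: nat
  assumes mu_nn: "\<And>k. k \<in> {1..N} \<Longrightarrow> 0 \<le> mu k" and mu_sum: "(\<Sum>k\<in>{1..N}. mu k) = 1"
    and c: "c \<in> {1..N}"
  shows "integrable (PiM {1..N} (\<lambda>_. U)) (\<lambda>x. indicator {x. Gamma N x mu = c} x * - ln (x c) :: real)"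
    and "(\<integral>x. indicator {x. Gamma N x mu = c} x * - ln (x c) \<partial>PiM {1..N} (\<lambda>_. U)) = (mu c ^ 2 :: real)"
proof -
  interpret P: product_prob_space "\<lambda>_::nat. U" "{1..N}" by (intro product_prob_spaceI U_prob)
  have [measurable]: "Measurable.pred (PiM {1..N} (\<lambda>_::nat. U)) (\<lambda>x. Gamma N x mu = c)"
    by (rule meas_Gamma_Q)
  have m: "(\<lambda>x. indicator {x. Gamma N x mu = c} x * - ln (x c) :: real) \<in> borel_measurable (PiM {1..N} (\<lambda>_. U))"
    unfolding indicator_def using c by measurable
  have nn: "(\<integral>\<^sup>+x. ennreal (indicator {x. Gamma N x mu = c} x * - ln (x c)) \<partial>PiM {1..N} (\<lambda>_. U)) = ennreal (mu c ^ 2)"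
  proof -
    have "\<And>x. ennreal (indicator {x. Gamma N x mu = c} x * - ln (x c)) = ennreal (- ln (x c)) * indicator {x. Gamma N x mu = c} x"
      by (simp add: indicator_def)
    then show ?thesis using sp_ln_nn[OF mu_nn mu_sum c] by simp
  qed
  have ae: "AE x in PiM {1..N} (\<lambda>_. U). 0 \<le> indicator {x. Gamma N x mu = c} x * - ln (x c)"
  proof -
    have "AE x in PiM {1..N} (\<lambda>_. U). 0 < x c \<and> x c < 1" using P.AE_component[OF c AE_U] by simp
    then show ?thesis by eventually_elim (auto simp: indicator_def)
  qed
  show "integrable (PiM {1..N} (\<lambda>_. U)) (\<lambda>x. indicator {x. Gamma N x mu = c} x * - ln (x c) :: real)"
    using m nn ae by (intro integrableI_nonneg) auto
  have "(\<integral>x. indicator {x. Gamma N x mu = c} x * - ln (x c) \<partial>PiM {1..N} (\<lambda>_. U)) = enn2real (ennreal (mu c ^ 2))"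
    using m nn ae by (subst integral_eq_nn_integral) auto
  then show "(\<integral>x. indicator {x. Gamma N x mu = c} x * - ln (x c) \<partial>PiM {1..N} (\<lambda>_. U)) = (mu c ^ 2 :: real)"
    by simp
qed

lemma ln_component:
  fixes I :: "'i set" and i :: 'i
  assumes i: "i \<in> I"
  shows "integrable (PiM I (\<lambda>_. U)) (\<lambda>x. - ln (x i))"
    and "(\<integral>x. - ln (x i) \<partial>PiM I (\<lambda>_. U)) = 1"
proof -
  interpret P: product_prob_space "\<lambda>_::'i. U" I by (intro product_prob_spaceI U_prob)
  have D: "distr (PiM I (\<lambda>_. U)) U (\<lambda>x. x i) = U" using P.PiM_component[OF i] .
  have aeU: "AE u in U. 0 \<le> - ln u"
    using AE_U by eventually_elim auto
  have intU: "integrable U (\<lambda>u. - ln u)"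
    using U_ln aeU by (intro integrableI_nonneg) auto
  have valU: "(\<integral>u. - ln u \<partial>U) = 1"
    using U_ln aeU by (subst integral_eq_nn_integral) auto
  have mi: "(\<lambda>x. x i) \<in> measurable (PiM I (\<lambda>_. U)) U"
    using i by (rule measurable_component_singleton)
  show "integrable (PiM I (\<lambda>_. U)) (\<lambda>x. - ln (x i))"
    using intU integrable_distr_eq[OF mi, of "\<lambda>u. - ln u"] D by simp
  show "(\<integral>x. - ln (x i) \<partial>PiM I (\<lambda>_. U)) = 1"
    using valU integral_distr[OF mi, of "\<lambda>u. - ln u"] D by simp
qed

lemma gen_length[simp]: "length (gen N p xi i) = i"
  by (induct i) auto

lemma gen_take: "j \<le> i \<Longrightarrow> take j (gen N p xi i) = gen N p xi j"
proof (induct i)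
  case (Suc i)
  then show ?case
    by (cases "j = Suc i") (auto simp: take_append)
qed simp

lemma gen_nth: "j < i \<Longrightarrow> gen N p xi i ! j = Gamma N (xi j) (p (gen N p xi j))"
proof (induct i)
  case (Suc i)
  then show ?case by (cases "j = i") (auto simp: nth_append)
qed simp

lemma gen_set: "1 \<le> N \<Longrightarrow> set (gen N p xi i) \<subseteq> {1..N}"
proof (induct i)
  case (Suc i)
  then show ?case using Gamma_in[OF Suc.prems, of "xi i" "p (gen N p xi i)"] by auto
qed simp

lemma gen_eq_iff:
  assumes y: "length y = n"
  shows "gen N p xi n = y \<longleftrightarrow> (\<forall>j<n. Gamma N (xi j) (p (take j y)) = y ! j)"
proof
  assume g: "gen N p xi n = y"
  show "\<forall>j<n. Gamma N (xi j) (p (take j y)) = y ! j"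
  proof (intro allI impI)
    fix j assume j: "j < n"
    have "take j y = gen N p xi j" using gen_take[of j n N p xi] j g by simp
    then show "Gamma N (xi j) (p (take j y)) = y ! j" using gen_nth[OF j, of N p xi] g by simp
  qed
next
  assume h: "\<forall>j<n. Gamma N (xi j) (p (take j y)) = y ! j"
  have "i \<le> n \<Longrightarrow> gen N p xi i = take i y" for i
  proof (induct i)
    case (Suc i)
    then have i: "i < n" by simp
    have "gen N p xi (Suc i) = take i y @ [y ! i]" using Suc h i by simp
    also have "\<dots> = take (Suc i) y" using i y by (simp add: take_Suc_conv_app_nth)
    finally show ?case .
  qed simp
  from this[of n] show "gen N p xi n = y" using y by simp
qed

lemma pair_mult:
  fixes f :: "'a \<Rightarrow> real" and g :: "'b \<Rightarrow> real"
  assumes A: "prob_space A" and B: "prob_space B" and f: "integrable A f" and g: "integrable B g"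
  shows "integrable (A \<Otimes>\<^sub>M B) (\<lambda>\<omega>. f (fst \<omega>) * g (snd \<omega>))"
    and "(\<integral>\<omega>. f (fst \<omega>) * g (snd \<omega>) \<partial>(A \<Otimes>\<^sub>M B)) = (\<integral>x. f x \<partial>A) * (\<integral>y. g y \<partial>B)"
proof -
  interpret A: prob_space A by (rule A)
  interpret B: prob_space B by (rule B)
  interpret AB: pair_sigma_finite A B
    by (intro pair_sigma_finite.intro A.sigma_finite_measure_axioms B.sigma_finite_measure_axioms)
  have [measurable]: "f \<in> borel_measurable A" "g \<in> borel_measurable B" using f g by auto
  have fi: "(\<integral>\<^sup>+x. ennreal (norm (f x)) \<partial>A) < \<infinity>" using f by (simp add: integrable_iff_bounded)
  have gi: "(\<integral>\<^sup>+y. ennreal (norm (g y)) \<partial>B) < \<infinity>" using g by (simp add: integrable_iff_bounded)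
  have "(\<integral>\<^sup>+\<omega>. ennreal (norm (f (fst \<omega>) * g (snd \<omega>))) \<partial>(A \<Otimes>\<^sub>M B))
      = (\<integral>\<^sup>+x. \<integral>\<^sup>+y. ennreal (norm (f (fst (x,y)) * g (snd (x,y)))) \<partial>B \<partial>A)"
    by (rule B.nn_integral_fst[symmetric]) measurable
  also have "\<dots> = (\<integral>\<^sup>+x. ennreal (norm (f x)) * (\<integral>\<^sup>+y. ennreal (norm (g y)) \<partial>B) \<partial>A)"
    by (intro nn_integral_cong) (simp add: abs_mult ennreal_mult nn_integral_cmult)
  also have "\<dots> = (\<integral>\<^sup>+x. ennreal (norm (f x)) \<partial>A) * (\<integral>\<^sup>+y. ennreal (norm (g y)) \<partial>B)"
    by (rule nn_integral_multc) measurable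
  also have "\<dots> < \<infinity>" using fi gi by (simp add: ennreal_mult_less_top)
  finally have fin: "(\<integral>\<^sup>+\<omega>. ennreal (norm (f (fst \<omega>) * g (snd \<omega>))) \<partial>(A \<Otimes>\<^sub>M B)) < \<infinity>" .
  show int: "integrable (A \<Otimes>\<^sub>M B) (\<lambda>\<omega>. f (fst \<omega>) * g (snd \<omega>))"
    using fin by (intro integrableI_bounded) measurable
  have "(\<integral>\<omega>. f (fst \<omega>) * g (snd \<omega>) \<partial>(A \<Otimes>\<^sub>M B)) = (\<integral>x. (\<integral>y. f (fst (x,y)) * g (snd (x,y)) \<partial>B) \<partial>A)"
    using AB.integral_fst'[OF int] by simp
  also have "\<dots> = (\<integral>x. f x * (\<integral>y. g y \<partial>B) \<partial>A)" by simp
  also have "\<dots> = (\<integral>x. f x \<partial>A) * (\<integral>y. g y \<partial>B)" by simp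
  finally show "(\<integral>\<omega>. f (fst \<omega>) * g (snd \<omega>) \<partial>(A \<Otimes>\<^sub>M B)) = (\<integral>x. f x \<partial>A) * (\<integral>y. g y \<partial>B)" .
qed

lemma coords_indep:
  fixes I :: "'i set"
  assumes I: "finite I" "I \<noteq> {}"
  shows "prob_space.indep_vars (PiM I (\<lambda>_. U)) (\<lambda>_. U) (\<lambda>i x. x i) I"
proof -
  interpret PK: product_prob_space "\<lambda>_::'i. U" I by (intro product_prob_spaceI U_prob)
  have pK: "prob_space (PiM I (\<lambda>_. U))" by (intro prob_space_PiM U_prob)
  have "distr (PiM I (\<lambda>_. U)) (PiM I (\<lambda>_. U)) (\<lambda>x. \<lambda>i\<in>I. x i) = PiM I (\<lambda>_. U)"
    using PK.distr_restrict[of I I] I by (simp add: restrict_def)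
  also have "\<dots> = PiM I (\<lambda>i. distr (PiM I (\<lambda>_. U)) U (\<lambda>x. x i))"
    by (intro PiM_cong refl PK.PiM_component[symmetric]) 
  finally show ?thesis
    by (subst prob_space.indep_vars_iff_distr_eq_PiM'[OF pK I(2)]) (auto intro: measurable_component_singleton)
qed

lemma prod_01r:
  "finite W \<Longrightarrow> (\<Prod>j\<in>W. (if P j then 1 else 0 :: real)) = (if \<forall>j\<in>W. P j then 1 else 0)"
  by (induct W rule: finite_induct) auto

lemma prod_if1:
  "finite W \<Longrightarrow> (\<Prod>j\<in>W. (if e \<and> j = i then v else 1 :: real)) = (if e \<and> i \<in> W then v else 1)"
  by (cases e) auto

lemma K_level:
  fixes n N :: nat and p :: "nat list \<Rightarrow> nat \<Rightarrow> real" and y :: "nat list" and i :: nat and e :: bool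
  assumes p_nonneg: "\<And>x k. p x k \<ge> 0" and p_sum: "\<And>x. (\<Sum>k\<in>{1..N}. p x k) = 1"
    and y: "length y = n" "set y \<subseteq> {1..N}" and i: "i < n"
  defines "h \<equiv> \<lambda>\<xi>::nat\<times>nat\<Rightarrow>real. (if gen N p (as_keys \<xi>) n = y then 1 else 0::real) * (if e then - ln (\<xi> (i, y!i)) else 1)"
  shows "integrable (keys_uniform n N) h"
    and "integral\<^sup>L (keys_uniform n N) h = (\<Prod>j<n. p (take j y) (y!j)) * (if e then p (take i y) (y!i) else 1)"
proof -
  define I where "I = key_index n N"
  have yi: "y ! j \<in> {1..N}" if "j < n" for j
  proof -
    have "y ! j \<in> set y" using that y(1) by simp
    then show ?thesis using y(2) by blast
  qed
  have N1: "1 \<le> N" using yi[OF i] by auto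
  have finI: "finite I" by (simp add: I_def key_index_def)
  have neI: "I \<noteq> {}" using i N1 by (auto simp: I_def key_index_def)
  have K: "keys_uniform n N = PiM I (\<lambda>_. U)" by (simp add: keys_uniform_def I_def)
  interpret PK: product_prob_space "\<lambda>_::nat\<times>nat. U" I by (intro product_prob_spaceI U_prob)
  have pK: "prob_space (PiM I (\<lambda>_. U))" by (intro prob_space_PiM U_prob)
  define Q where "Q = PiM {1..N} (\<lambda>_::nat. U)"
  define X where "X j \<xi> = (\<lambda>k\<in>{1..N}. \<xi> (j,k))" for j and \<xi> :: "nat\<times>nat \<Rightarrow> real"
  define \<phi> where "\<phi> j x = (if Gamma N x (p (take j y)) = y!j then 1 else 0::real) * (if e \<and> j = i then - ln (x (y!i)) else 1)" for j and x :: "nat \<Rightarrow> real"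
  define Kj where "Kj j = {j} \<times> {1..N}" for j :: nat
  have jkI: "(j, k) \<in> I" if "j < n" "k \<in> {1..N}" for j k using that by (simp add: I_def key_index_def)
  have Xm: "X j \<in> measurable (PiM I (\<lambda>_. U)) Q" if j: "j < n" for j
    unfolding X_def Q_def
    by (intro measurable_restrict measurable_component_singleton jkI[OF j]) 
  have Xd: "distr (PiM I (\<lambda>_. U)) Q (X j) = Q" if j: "j < n" for j
  proof -
    have "distr (PiM I (\<lambda>_. U)) (PiM {1..N} (\<lambda>x. U)) (\<lambda>\<omega>. \<lambda>k\<in>{1..N}. \<omega> ((\<lambda>k. (j,k)) k)) = PiM {1..N} (\<lambda>x. U)"
      by (rule PK.distr_reorder) (auto simp: inj_on_def finI jkI[OF j])
    moreover have "X j = (\<lambda>\<omega>. \<lambda>k\<in>{1..N}. \<omega> ((\<lambda>k. (j,k)) k))" by (simp add: X_def fun_eq_iff)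
    ultimately show ?thesis by (simp add: Q_def)
  qed
  have \<phi>m: "\<phi> j \<in> borel_measurable Q" if j: "j < n" for j
  proof -
    have [measurable]: "Measurable.pred Q (\<lambda>x. Gamma N x (p (take j y)) = y!j)"
      unfolding Q_def by (rule meas_Gamma_Q)
    have "(\<lambda>x. x (y!i)) \<in> measurable Q U"
      unfolding Q_def by (rule measurable_component_singleton[OF yi[OF i]])
    then have [measurable]: "(\<lambda>x. x (y!i)) \<in> borel_measurable Q"
      using measurable_cong_sets[OF refl sets_U, of Q] by simp
    show ?thesis unfolding \<phi>_def by measurable
  qed
  have Qint: "integrable Q (\<phi> j) \<and> integral\<^sup>L Q (\<phi> j) = p (take j y) (y!j) * (if e \<and> j = i then p (take i y) (y!i) else 1)"
    if j: "j < n" for j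
  proof (cases "e \<and> j = i")
    case True
    then have eq: "\<phi> j = (\<lambda>x. indicator {x. Gamma N x (p (take j y)) = y ! j} x * - ln (x (y ! j)))"
      by (auto simp: \<phi>_def fun_eq_iff indicator_def)
    show ?thesis unfolding eq Q_def
      using sp_L2[of N "p (take j y)" "y!j"] p_nonneg p_sum yi[OF j] True by (simp add: power2_eq_square)
  next
    case False
    then have eq: "\<phi> j = (\<lambda>x. indicator {x. Gamma N x (p (take j y)) = y ! j} x)"
      by (auto simp: \<phi>_def fun_eq_iff indicator_def)
    have one: "(if e \<and> j = i then p (take i y) (y!i) else 1) = 1" using False by auto
    show ?thesis unfolding eq Q_def one
      using sp_L1[of N "p (take j y)" "y!j"] p_nonneg p_sum yi[OF j] by simp
  qed
  have intj: "integrable (PiM I (\<lambda>_. U)) (\<lambda>\<xi>. \<phi> j (X j \<xi>))" if j: "j < n" for j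
    using Qint[OF j] integrable_distr_eq[OF Xm[OF j] \<phi>m[OF j]] Xd[OF j] by simp
  have valj: "(\<integral>\<xi>. \<phi> j (X j \<xi>) \<partial>PiM I (\<lambda>_. U)) = p (take j y) (y!j) * (if e \<and> j = i then p (take i y) (y!i) else 1)"
    if j: "j < n" for j
    using Qint[OF j] integral_distr[OF Xm[OF j] \<phi>m[OF j]] Xd[OF j] by simp
  have ind: "prob_space.indep_vars (PiM I (\<lambda>_. U)) (\<lambda>_. borel) (\<lambda>j \<xi>. \<phi> j (X j \<xi>)) {..<n}"
  proof -
    have "prob_space.indep_vars (PiM I (\<lambda>_. U)) (\<lambda>j. PiM (Kj j) (\<lambda>_. U)) (\<lambda>j \<omega>. restrict (\<lambda>i. \<omega> i) (Kj j)) {..<n}"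
    proof -
      have sub: "\<And>j. j \<in> {..<n} \<Longrightarrow> Kj j \<subseteq> I" by (auto simp: Kj_def I_def key_index_def)
      have dis: "disjoint_family_on Kj {..<n}" by (auto simp: Kj_def disjoint_family_on_def)
      show ?thesis by (rule prob_space.indep_vars_restrict[OF pK coords_indep[OF finI neI] sub dis])
    qed
    then have "prob_space.indep_vars (PiM I (\<lambda>_. U)) (\<lambda>_. borel)
        (\<lambda>j \<omega>. (\<lambda>f. \<phi> j (\<lambda>k\<in>{1..N}. f (j,k))) (restrict (\<lambda>i. \<omega> i) (Kj j))) {..<n}"
    proof (rule prob_space.indep_vars_compose2[OF pK])
      fix j assume j: "j \<in> {..<n}"
      have "(\<lambda>f. \<lambda>k\<in>{1..N}. f (j,k)) \<in> measurable (PiM (Kj j) (\<lambda>_. U)) Q"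
        unfolding Q_def by (intro measurable_restrict measurable_component_singleton) (auto simp: Kj_def)
      then show "(\<lambda>f. \<phi> j (\<lambda>k\<in>{1..N}. f (j,k))) \<in> borel_measurable (PiM (Kj j) (\<lambda>_. U))"
        using \<phi>m[of j] j by (intro measurable_compose[OF _ \<phi>m]) auto
    qed
    moreover have "(\<lambda>f. \<phi> j (\<lambda>k\<in>{1..N}. f (j,k))) (restrict (\<lambda>i. \<omega> i) (Kj j)) = \<phi> j (X j \<omega>)" for j \<omega>
      by (simp add: X_def Kj_def restrict_def cong: if_cong)
    ultimately show ?thesis by simp
  qed
  have pw: "(\<Prod>j<n. \<phi> j (X j \<xi>)) = h \<xi>" for \<xi>
  proof -
    have g: "Gamma N (X j \<xi>) (p (take j y)) = Gamma N (as_keys \<xi> j) (p (take j y))" for j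
      by (rule Gamma_cong) (simp add: X_def as_keys_def)
    have "(\<Prod>j<n. \<phi> j (X j \<xi>)) = (\<Prod>j<n. (if Gamma N (X j \<xi>) (p (take j y)) = y!j then 1 else 0::real)) *
           (\<Prod>j<n. (if e \<and> j = i then - ln (X j \<xi> (y!i)) else 1))"
      unfolding \<phi>_def by (rule prod.distrib)
    also have "(\<Prod>j<n. (if e \<and> j = i then - ln (X j \<xi> (y!i)) else 1)) = (if e then - ln (\<xi> (i, y!i)) else 1)"
    proof -
      have "(\<Prod>j<n. (if e \<and> j = i then - ln (X j \<xi> (y!i)) else 1)) = (\<Prod>j<n. (if e \<and> j = i then - ln (X i \<xi> (y!i)) else 1))"
        by (intro prod.cong) auto
      also have "\<dots> = (if e then - ln (X i \<xi> (y!i)) else 1)" using i by (simp add: prod_if1)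
      finally show ?thesis using yi[OF i] by (simp add: X_def)
    qed
    also have "(\<Prod>j<n. (if Gamma N (X j \<xi>) (p (take j y)) = y!j then 1 else 0::real)) = (if gen N p (as_keys \<xi>) n = y then 1 else 0)"
      by (simp add: prod_01r g gen_eq_iff[OF y(1)] lessThan_iff)
    finally show ?thesis by (simp add: h_def)
  qed
  have "integrable (PiM I (\<lambda>_. U)) (\<lambda>\<xi>. \<Prod>j<n. \<phi> j (X j \<xi>))"
    using prob_space.indep_vars_integrable[OF pK _ ind intj] by simp
  then show "integrable (keys_uniform n N) h" unfolding K using pw by simp
  have "(\<integral>\<xi>. (\<Prod>j<n. \<phi> j (X j \<xi>)) \<partial>PiM I (\<lambda>_. U)) = (\<Prod>j<n. \<integral>\<xi>. \<phi> j (X j \<xi>) \<partial>PiM I (\<lambda>_. U))"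
    using prob_space.indep_vars_lebesgue_integral[OF pK _ ind intj] by simp
  also have "\<dots> = (\<Prod>j<n. p (take j y) (y!j) * (if e \<and> j = i then p (take i y) (y!i) else 1))"
    by (intro prod.cong refl valj) simp
  also have "\<dots> = (\<Prod>j<n. p (take j y) (y!j)) * (if e then p (take i y) (y!i) else 1)"
    using i by (simp add: prod.distrib prod_if1)
  finally show "integral\<^sup>L (keys_uniform n N) h = (\<Prod>j<n. p (take j y) (y!j)) * (if e then p (take i y) (y!i) else 1)"
    unfolding K using pw by simp
qed

lemma Y_level:
  fixes n N :: nat and p :: "nat list \<Rightarrow> nat \<Rightarrow> real" and y :: "nat list" and i :: nat and c :: real
  assumes p_nonneg: "\<And>x k. p x k \<ge> 0" and p_sum: "\<And>x. (\<Sum>k\<in>{1..N}. p x k) = 1"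
    and y: "length y = n" "set y \<subseteq> {1..N}" and i: "i < n"
  defines "a \<equiv> \<lambda>\<xi>::nat\<times>nat\<Rightarrow>real. (if gen N p (as_keys \<xi>) n = y then 1 else 0::real)"
  shows "integrable (two_keys n N) (\<lambda>\<omega>. a (fst \<omega>) * - ln (snd \<omega> (i, y!i)) - a (fst \<omega>) * - ln (fst \<omega> (i, y!i)))"
    and "(\<integral>\<omega>. a (fst \<omega>) * - ln (snd \<omega> (i, y!i)) - a (fst \<omega>) * - ln (fst \<omega> (i, y!i)) \<partial>two_keys n N)
         = (\<Prod>j<n. p (take j y) (y!j)) - (\<Prod>j<n. p (take j y) (y!j)) * p (take i y) (y!i)"
    and "integrable (two_keys n N) (\<lambda>\<omega>. a (fst \<omega>) * c)"
    and "(\<integral>\<omega>. a (fst \<omega>) * c \<partial>two_keys n N) = (\<Prod>j<n. p (take j y) (y!j)) * c"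
proof -
  define K where "K = keys_uniform n N"
  define I where "I = key_index n N"
  have KI: "K = PiM I (\<lambda>_. U)" by (simp add: K_def keys_uniform_def I_def)
  have pK: "prob_space K" unfolding KI by (intro prob_space_PiM U_prob)
  interpret Kp: prob_space K by (rule pK)
  have M: "two_keys n N = K \<Otimes>\<^sub>M K" by (simp add: two_keys_def K_def)
  have yi: "y ! i \<in> {1..N}"
  proof -
    have "y ! i \<in> set y" using i y(1) by simp
    then show ?thesis using y(2) by blast
  qed
  have iI: "(i, y!i) \<in> I" using i yi by (simp add: I_def key_index_def)
  have ha: "integrable K a" "integral\<^sup>L K a = (\<Prod>j<n. p (take j y) (y!j))"
    using K_level[OF p_nonneg p_sum y i, where e=False] by (simp_all add: a_def K_def)
  have hb: "integrable K (\<lambda>\<xi>. a \<xi> * - ln (\<xi> (i, y!i)))"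
     "(\<integral>\<xi>. a \<xi> * - ln (\<xi> (i, y!i)) \<partial>K) = (\<Prod>j<n. p (take j y) (y!j)) * p (take i y) (y!i)"
    using K_level[OF p_nonneg p_sum y i, where e=True] by (simp_all add: a_def K_def)
  have hl: "integrable K (\<lambda>\<xi>. - ln (\<xi> (i, y!i)))" "(\<integral>\<xi>. - ln (\<xi> (i, y!i)) \<partial>K) = 1"
    unfolding KI using ln_component[OF iI] by auto
  have one: "integrable K (\<lambda>_. 1::real)" "(\<integral>\<xi>. 1 \<partial>K) = (1::real)" by (auto simp: Kp.prob_space)
  have cc: "integrable K (\<lambda>_. c)" "(\<integral>\<xi>. c \<partial>K) = c" by (auto simp: Kp.prob_space)
  note P1 = pair_mult[OF pK pK ha(1) hl(1)]
  note P2 = pair_mult[OF pK pK hb(1) one(1)]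
  note P3 = pair_mult[OF pK pK ha(1) cc(1)]
  show "integrable (two_keys n N) (\<lambda>\<omega>. a (fst \<omega>) * - ln (snd \<omega> (i, y!i)) - a (fst \<omega>) * - ln (fst \<omega> (i, y!i)))"
    unfolding M using P1(1) P2(1) by simp
  show "(\<integral>\<omega>. a (fst \<omega>) * - ln (snd \<omega> (i, y!i)) - a (fst \<omega>) * - ln (fst \<omega> (i, y!i)) \<partial>two_keys n N)
         = (\<Prod>j<n. p (take j y) (y!j)) - (\<Prod>j<n. p (take j y) (y!j)) * p (take i y) (y!i)"
    unfolding M using P1 P2 ha hb hl one by (simp del: integral_mult_right_zero integral_mult_left_zero)
  show "integrable (two_keys n N) (\<lambda>\<omega>. a (fst \<omega>) * c)"
    unfolding M using P3(1) by simp
  show "(\<integral>\<omega>. a (fst \<omega>) * c \<partial>two_keys n N) = (\<Prod>j<n. p (take j y) (y!j)) * c"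
    by (simp only: M P3(2) ha(2) cc(2))
qed

theorem lemma7:
  fixes n N :: nat and p :: "nat list \<Rightarrow> nat \<Rightarrow> real"
  assumes p_nonneg: "\<And>x k. p x k \<ge> 0"
    and p_sum: "\<And>x. (\<Sum>k\<in>{1..N}. p x k) = 1"
  defines "M \<equiv> two_keys n N"
    and "Y \<equiv> (\<lambda>\<omega>. generate N (as_keys (fst \<omega>)) n p)"
  shows "AE \<omega> in M. \<forall>i<n.
           real_cond_exp M (vimage_algebra (space M) Y (count_space UNIV))
             (\<lambda>\<omega>'. dtok (Y \<omega>' ! i) (as_keys (snd \<omega>') i) - dtok (Y \<omega>' ! i) (as_keys (fst \<omega>') i)) \<omega>
           = 1 - p (take i (Y \<omega>)) (Y \<omega> ! i)"
proof -
  have N1: "1 \<le> N"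
  proof (rule ccontr)
    assume "\<not> 1 \<le> N" then have "N = 0" by simp
    then show False using p_sum[of "[]"] by simp
  qed
  define K where "K = keys_uniform n N"
  define I where "I = key_index n N"
  have KI: "K = PiM I (\<lambda>_. U)" by (simp add: K_def keys_uniform_def I_def)
  have pK: "prob_space K" unfolding KI by (intro prob_space_PiM U_prob)
  have MK: "M = K \<Otimes>\<^sub>M K" by (simp add: M_def two_keys_def K_def)
  have pM: "prob_space M" unfolding MK by (intro prob_space_pair pK)
  interpret Mp: prob_space M by (rule pM)
  define Yk where "Yk \<xi> = gen N p (as_keys \<xi>) n" for \<xi>
  have Y_eq: "Y = (\<lambda>\<omega>. Yk (fst \<omega>))" by (simp add: Y_def Yk_def generate_def fun_eq_iff)
  define L where "L = {ys. set ys \<subseteq> {1..N} \<and> length ys = n}"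
  have finL: "finite L" unfolding L_def by (rule finite_lists_length_eq) simp
  have YL: "Yk \<xi> \<in> L" for \<xi> using gen_set[OF N1, of p "as_keys \<xi>" n] by (simp add: L_def Yk_def)
  have predY: "Measurable.pred K (\<lambda>\<xi>. Yk \<xi> = y)" for y
  proof (cases "length y = n")
    case True
    have eq: "(\<lambda>\<xi>. Yk \<xi> = y) = (\<lambda>\<xi>. \<forall>j\<in>{..<n}. Gamma N (as_keys \<xi> j) (p (take j y)) = y!j)"
      by (auto simp: Yk_def gen_eq_iff[OF True] fun_eq_iff)
    have "Measurable.pred K (\<lambda>\<xi>. Gamma N (as_keys \<xi> j) (p (take j y)) = y!j)" if j: "j \<in> {..<n}" for j
    proof (rule pred_Gamma)
      fix k assume k: "k \<in> {1..N}"
      have "(\<lambda>\<omega>. \<omega> (j,k)) \<in> measurable K U"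
        unfolding KI using j k by (intro measurable_component_singleton) (simp add: I_def key_index_def)
      then show "(\<lambda>\<omega>. as_keys \<omega> j k) \<in> borel_measurable K"
        using measurable_cong_sets[OF refl sets_U, of K] by (simp add: as_keys_def)
    qed
    then show ?thesis unfolding eq by (intro pred_intros_finite) auto
  next
    case False
    then have "(\<lambda>\<xi>. Yk \<xi> = y) = (\<lambda>\<xi>. False)" by (auto simp: Yk_def fun_eq_iff)
    then show ?thesis by (simp add: pred_const_bool)
  qed
  have Ykm: "Yk \<in> measurable K (count_space UNIV)"
    unfolding measurable_count_space_eq2_countable
  proof (intro conjI ballI)
    fix y :: "nat list"
    have "{\<xi> \<in> space K. Yk \<xi> = y} \<in> sets K" using predY[of y] by (simp add: pred_def)
    moreover have "Yk -` {y} \<inter> space K = {\<xi> \<in> space K. Yk \<xi> = y}" by auto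
    ultimately show "Yk -` {y} \<inter> space K \<in> sets K" by simp
  qed simp
  have Ym: "Y \<in> measurable M (count_space UNIV)"
    unfolding Y_eq MK by (rule measurable_compose[OF measurable_fst Ykm])
  define F where "F = vimage_algebra (space M) Y (count_space UNIV)"
  have subalg: "subalgebra M F" unfolding subalgebra_def F_def using sets_image_in_sets[OF refl Ym] by simp
  interpret S: finite_measure_subalgebra M F
    by (intro finite_measure_subalgebra.intro Mp.finite_measure_axioms) (simp add: finite_measure_subalgebra_axioms_def subalg)
  have YmF: "Y \<in> measurable F (count_space UNIV)" unfolding F_def by (rule measurable_vimage_algebra1) simp
  have AEi: "AE \<omega> in M. real_cond_exp M F
             (\<lambda>\<omega>'. dtok (Y \<omega>' ! i) (as_keys (snd \<omega>') i) - dtok (Y \<omega>' ! i) (as_keys (fst \<omega>') i)) \<omega>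
           = 1 - p (take i (Y \<omega>)) (Y \<omega> ! i)" if i: "i < n" for i
  proof -
    define f where "f \<omega> = dtok (Y \<omega> ! i) (as_keys (snd \<omega>) i) - dtok (Y \<omega> ! i) (as_keys (fst \<omega>) i)" for \<omega>
    define g where "g \<omega> = 1 - p (take i (Y \<omega>)) (Y \<omega> ! i)" for \<omega>
    define a where "a y \<xi> = (if gen N p (as_keys \<xi>) n = y then 1 else 0 :: real)" for y and \<xi> :: "nat\<times>nat \<Rightarrow> real"
    define Py where "Py y = (\<Prod>j<n. p (take j y) (y!j))" for y
    have fy: "(\<lambda>\<omega>. if Y \<omega> = y then f \<omega> else 0) = (\<lambda>\<omega>. a y (fst \<omega>) * - ln (snd \<omega> (i, y!i)) - a y (fst \<omega>) * - ln (fst \<omega> (i, y!i)))" for y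
      by (auto simp: fun_eq_iff f_def a_def Y_eq Yk_def dtok_def as_keys_def)
    have gy: "(\<lambda>\<omega>. if Y \<omega> = y then g \<omega> else 0) = (\<lambda>\<omega>. a y (fst \<omega>) * (1 - p (take i y) (y!i)))" for y
      by (auto simp: fun_eq_iff g_def a_def Y_eq Yk_def)
    have intf: "integrable M (\<lambda>\<omega>. if Y \<omega> = y then f \<omega> else 0)"
      and valf: "(\<integral>\<omega>. (if Y \<omega> = y then f \<omega> else 0) \<partial>M) = Py y - Py y * p (take i y) (y!i)" if y: "y \<in> L" for y
      using Y_level(1,2)[OF p_nonneg p_sum _ _ i, of y] y unfolding fy M_def a_def Py_def L_def by auto
    have intg: "integrable M (\<lambda>\<omega>. if Y \<omega> = y then g \<omega> else 0)"
      and valg: "(\<integral>\<omega>. (if Y \<omega> = y then g \<omega> else 0) \<partial>M) = Py y * (1 - p (take i y) (y!i))" if y: "y \<in> L" for y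
    proof -
      have yl: "length y = n" "set y \<subseteq> {1..N}" using y by (auto simp: L_def)
      show "integrable M (\<lambda>\<omega>. if Y \<omega> = y then g \<omega> else 0)"
        using Y_level(3)[OF p_nonneg p_sum yl i, where c="1 - p (take i y) (y!i)"]
        unfolding gy M_def a_def by simp
      show "(\<integral>\<omega>. (if Y \<omega> = y then g \<omega> else 0) \<partial>M) = Py y * (1 - p (take i y) (y!i))"
        using Y_level(4)[OF p_nonneg p_sum yl i, where c="1 - p (take i y) (y!i)"]
        unfolding gy M_def a_def Py_def by simp
    qed
    have decomp: "(if Y \<omega> \<in> B then 1 else 0) * (h \<omega> :: real) = (\<Sum>y\<in>L\<inter>B. (if Y \<omega> = y then h \<omega> else 0))" for B h \<omega>
    proof -
      have "(\<Sum>y\<in>L\<inter>B. (if Y \<omega> = y then h \<omega> else 0)) = (if Y \<omega> \<in> L\<inter>B then h \<omega> else 0)"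
        using finL by (simp add: sum.delta')
      then show ?thesis using YL[of "fst \<omega>"] by (simp add: Y_eq)
    qed
    have fsum: "f = (\<lambda>\<omega>. \<Sum>y\<in>L. (if Y \<omega> = y then f \<omega> else 0))"
      using decomp[of _ UNIV f] by (simp add: fun_eq_iff)
    have gsum: "g = (\<lambda>\<omega>. \<Sum>y\<in>L. (if Y \<omega> = y then g \<omega> else 0))"
      using decomp[of _ UNIV g] by (simp add: fun_eq_iff)
    have "AE \<omega> in M. real_cond_exp M F f \<omega> = g \<omega>"
    proof (rule S.real_cond_exp_charact)
      fix A assume A: "A \<in> sets F"
      then obtain B where AB: "A = Y -` B \<inter> space M"
        unfolding F_def by (subst (asm) sets_vimage_algebra2) auto
      have indA: "indicator A \<omega> = (if Y \<omega> \<in> B then 1 else (0::real))" if "\<omega> \<in> space M" for \<omega>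
        using that by (simp add: AB indicator_def)
      have "(\<integral>\<omega>\<in>A. f \<omega> \<partial>M) = (\<integral>\<omega>. (\<Sum>y\<in>L\<inter>B. (if Y \<omega> = y then f \<omega> else 0)) \<partial>M)"
        unfolding set_lebesgue_integral_def by (rule Bochner_Integration.integral_cong) (auto simp: indA decomp)
      also have "\<dots> = (\<Sum>y\<in>L\<inter>B. (\<integral>\<omega>. (if Y \<omega> = y then f \<omega> else 0) \<partial>M))"
        by (rule Bochner_Integration.integral_sum) (use intf in auto)
      also have "\<dots> = (\<Sum>y\<in>L\<inter>B. Py y - Py y * p (take i y) (y!i))"
        by (intro sum.cong refl valf) auto
      also have "\<dots> = (\<Sum>y\<in>L\<inter>B. (\<integral>\<omega>. (if Y \<omega> = y then g \<omega> else 0) \<partial>M))"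
        by (intro sum.cong refl) (auto simp: valg algebra_simps)
      also have "\<dots> = (\<integral>\<omega>. (\<Sum>y\<in>L\<inter>B. (if Y \<omega> = y then g \<omega> else 0)) \<partial>M)"
        by (rule Bochner_Integration.integral_sum[symmetric]) (use intg in auto)
      also have "\<dots> = (\<integral>\<omega>\<in>A. g \<omega> \<partial>M)"
        unfolding set_lebesgue_integral_def by (rule Bochner_Integration.integral_cong) (auto simp: indA decomp)
      finally show "(\<integral>\<omega>\<in>A. f \<omega> \<partial>M) = (\<integral>\<omega>\<in>A. g \<omega> \<partial>M)" .
    next
      show "integrable M f" by (subst fsum) (use intf in auto)
    next
      show "integrable M g" by (subst gsum) (use intg in auto)
    next
      have "(\<lambda>ys. 1 - p (take i ys) (ys ! i)) \<in> borel_measurable (count_space UNIV)" by simp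
      then show "g \<in> borel_measurable F"
        unfolding g_def using measurable_compose[OF YmF] by blast
    qed
    moreover have "(\<lambda>\<omega>'. dtok (Y \<omega>' ! i) (as_keys (snd \<omega>') i) - dtok (Y \<omega>' ! i) (as_keys (fst \<omega>') i)) = f"
      by (simp add: f_def fun_eq_iff)
    ultimately show ?thesis by (simp add: g_def)
  qed
  have "AE \<omega> in M. \<forall>i\<in>{..<n}. real_cond_exp M F
             (\<lambda>\<omega>'. dtok (Y \<omega>' ! i) (as_keys (snd \<omega>') i) - dtok (Y \<omega>' ! i) (as_keys (fst \<omega>') i)) \<omega>
           = 1 - p (take i (Y \<omega>)) (Y \<omega> ! i)"
    by (rule AE_finite_allI) (use AEi in auto)
  then show ?thesis unfolding F_def by (rule eventually_mono) auto
qed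

end
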